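(* Let $G$ be a group acting sharply $k$-transitively on a finite set $X$ with $n$ elements, where $k\ge 1$. Let $\mathbf{x}=(x_1,\ldots,x_n)$ be a sequencing of the $G$-set $X$. Then the orbit of $\mathbf{x}$ under $G$, namely the collection of sequences $(gx_1,\ldots,gx_n)$ for $g\in G$, forms an $(n,k+1)$-permutation design.
   Context: For a $G$-set $X$ and an integer $m\ge1$, $X^{(m)}\subseteq X^m$ denotes the set of ordered $m$-tuples of distinct elements of $X$, with $G$ acting coordinatewise. The action of $G$ on $X$ is sharply $k$-transitive if for any $(x_1,\ldots,x_k),(y_1,\ldots,y_k)\in X^{(k)}$ there is exactly one $g\in G$ with $gx_i=y_i$ for all $i$. A sequencing of a sharply $k$-transitive $G$-set $X$ with $n$ elements is an enumeration $(x_1,\ldots,x_n)$ of the elements of $X$ (each element appearing exactly once) such that the $n-k$ tuples $(x_1,\ldots,x_{k+1}),(x_2,\ldots,x_{k+2}),\ldots,(x_{n-k},\ldots,x_n)$ lie in pairwise distinct orbits of $G$ acting on $X^{(k+1)}$. For integers $n\ge t\ge1$, write $n^{\underline{t}}=n(n-1)\cdots(n-t+1)$. An $(n,t)$-permutation design is a set of $n^{\underline{t-1}}$ permutations of an $n$-set (each written as a sequence listing all $n$ elements) such that every ordered $t$-tuple of distinct elements of the set occurs exactly once as a contiguous subsequence of one of the permutations. *)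

theory Defs
  imports "HOL-Algebra.Group_Action"
begin

definition dtuples :: "'b set \<Rightarrow> nat \<Rightarrow> 'b list set" where
  "dtuples X m = {xs. length xs = m \<and> distinct xs \<and> set xs \<subseteq> X}"

definition falling :: "nat \<Rightarrow> nat \<Rightarrow> nat" where
  "falling n t = (\<Prod>i<t. n - i)"

definition sharply_k_transitive ::
  "('a, 'c) monoid_scheme \<Rightarrow> 'b set \<Rightarrow> ('a \<Rightarrow> 'b \<Rightarrow> 'b) \<Rightarrow> nat \<Rightarrow> bool" where
  "sharply_k_transitive G X \<phi> k \<longleftrightarrow> group_action G X \<phi> \<and>
     (\<forall>xs\<in>dtuples X k. \<forall>ys\<in>dtuples X k. \<exists>!g. g \<in> carrier G \<and> map (\<phi> g) xs = ys)"

definition same_orbit ::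
  "('a, 'c) monoid_scheme \<Rightarrow> ('a \<Rightarrow> 'b \<Rightarrow> 'b) \<Rightarrow> 'b list \<Rightarrow> 'b list \<Rightarrow> bool" where
  "same_orbit G \<phi> u v \<longleftrightarrow> (\<exists>g\<in>carrier G. map (\<phi> g) u = v)"

(* the i-th window (x_{i+1},...,x_{i+m}) (0-based i) *)
definition window :: "'b list \<Rightarrow> nat \<Rightarrow> nat \<Rightarrow> 'b list" where
  "window xs i m = take m (drop i xs)"

definition sequencing ::
  "('a, 'c) monoid_scheme \<Rightarrow> 'b set \<Rightarrow> ('a \<Rightarrow> 'b \<Rightarrow> 'b) \<Rightarrow> nat \<Rightarrow> 'b list \<Rightarrow> bool" where
  "sequencing G X \<phi> k xs \<longleftrightarrow> distinct xs \<and> set xs = X \<and>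
     (\<forall>i j. i < j \<and> j < length xs - k \<longrightarrow>
        \<not> same_orbit G \<phi> (window xs i (k+1)) (window xs j (k+1)))"

definition perm_design :: "'b set \<Rightarrow> nat \<Rightarrow> 'b list set \<Rightarrow> bool" where
  "perm_design X t P \<longleftrightarrow> finite P \<and>
     card P = falling (card X) (t - 1) \<and>
     (\<forall>p\<in>P. distinct p \<and> set p = X) \<and>
     (\<forall>u\<in>dtuples X t. card {(p, i). p \<in> P \<and> i + t \<le> length p \<and> window p i t = u} = 1)"

end

theory Submission
  imports Defs
begin

lemma falling_prod: "m \<le> n \<Longrightarrow> falling n m = \<Prod>{n - m + 1..n}"
proof (induction m)
  case 0 then show ?case by (simp add: falling_def)
next
  case (Suc m)
  have e: "{n - Suc m + 1..n} = insert (n - m) {n - m + 1..n}"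
    using Suc.prems by auto
  have "falling n (Suc m) = falling n m * (n - m)" by (simp add: falling_def)
  also have "\<dots> = (n - m) * \<Prod>{n - m + 1..n}" using Suc by simp
  also have "\<dots> = \<Prod>{n - Suc m + 1..n}" unfolding e by (subst prod.insert) auto
  finally show ?case .
qed

lemma card_dtuples: "finite X \<Longrightarrow> m \<le> card X \<Longrightarrow> card (dtuples X m) = falling (card X) m"
  unfolding dtuples_def by (simp add: card_lists_distinct_length_eq falling_prod)

lemma finite_dtuples: "finite X \<Longrightarrow> finite (dtuples X m)"
proof -
  assume "finite X"
  have "dtuples X m \<subseteq> {xs. set xs \<subseteq> X \<and> length xs = m}" unfolding dtuples_def by auto
  moreover have "finite {xs. set xs \<subseteq> X \<and> length xs = m}"
    using \<open>finite X\<close> by (rule finite_lists_length_eq)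
  ultimately show ?thesis by (rule finite_subset)
qed

lemma map_dtuples:
  assumes "group_action G X \<phi>" "g \<in> carrier G" "w \<in> dtuples X m"
  shows "map (\<phi> g) w \<in> dtuples X m"
proof -
  have "inj_on (\<phi> g) X" using group_action.inj_prop[OF assms(1,2)] .
  moreover have "\<phi> g ` X = X" using group_action.surj_prop[OF assms(1,2)] .
  ultimately show ?thesis using assms(3) unfolding dtuples_def
    by (auto simp: distinct_map inj_on_subset)
qed

lemma window_dtuples:
  assumes "distinct xs" "set xs = X" "i + m \<le> length xs"
  shows "window xs i m \<in> dtuples X m"
  using assms unfolding dtuples_def window_def
  by (auto dest: in_set_takeD in_set_dropD)

lemma window_map: "window (map f xs) i m = map f (window xs i m)"
  unfolding window_def by (simp add: take_map drop_map)

theorem theorem3p1: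
  fixes G :: "('a, 'c) monoid_scheme" and X :: "'b set" and \<phi> :: "'a \<Rightarrow> 'b \<Rightarrow> 'b"
    and k :: nat and xs :: "'b list"
  assumes "finite X" and "1 \<le> k" and "k \<le> card X"
    and "sharply_k_transitive G X \<phi> k"
    and "sequencing G X \<phi> k xs"
  shows "perm_design X (k + 1) {map (\<phi> g) xs | g. g \<in> carrier G}"
proof -
  have GA: "group_action G X \<phi>" and ST: "\<And>xs ys. xs \<in> dtuples X k \<Longrightarrow> ys \<in> dtuples X k \<Longrightarrow>
      \<exists>!g. g \<in> carrier G \<and> map (\<phi> g) xs = ys"
    using assms(4) unfolding sharply_k_transitive_def by auto
  have grp: "group G" using GA unfolding group_action_def group_hom_def by simp
  have dxs: "distinct xs" and sxs: "set xs = X" and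
    seq: "\<And>i j. i < j \<Longrightarrow> j < length xs - k \<Longrightarrow>
        \<not> same_orbit G \<phi> (window xs i (k+1)) (window xs j (k+1))"
    using assms(5) unfolding sequencing_def by blast+
  define n where "n = card X"
  have len: "length xs = n" using distinct_card[OF dxs] sxs n_def by simp
  have free: "g = h" if "g \<in> carrier G" "h \<in> carrier G" "w \<in> dtuples X m" "k \<le> m"
      "map (\<phi> g) w = map (\<phi> h) w" for g h w m
  proof -
    have tw: "take k w \<in> dtuples X k" using that(3,4) unfolding dtuples_def
      by (auto dest: in_set_takeD)
    have eq: "map (\<phi> g) (take k w) = map (\<phi> h) (take k w)"
      using arg_cong[OF that(5), of "take k"] by (simp add: take_map)
    have "map (\<phi> g) (take k w) \<in> dtuples X k" using map_dtuples[OF GA that(1) tw] .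
    from ST[OF tw this] obtain g0 where
      g0: "\<And>y. y \<in> carrier G \<and> map (\<phi> y) (take k w) = map (\<phi> g) (take k w) \<Longrightarrow> y = g0"
      by (metis (no_types, lifting))
    show ?thesis using g0[of g] g0[of h] that(1,2) eq by simp
  qed
  define x0 where "x0 = take k xs"
  have x0: "x0 \<in> dtuples X k" unfolding x0_def
    using window_dtuples[OF dxs sxs, of 0 k] assms(3) len n_def by (simp add: window_def)
  have bijF: "bij_betw (\<lambda>g. map (\<phi> g) x0) (carrier G) (dtuples X k)"
    unfolding bij_betw_def
  proof
    show "inj_on (\<lambda>g. map (\<phi> g) x0) (carrier G)"
      by (rule inj_onI) (use free x0 in blast)
    show "(\<lambda>g. map (\<phi> g) x0) ` carrier G = dtuples X k"
    proof
      show "(\<lambda>g. map (\<phi> g) x0) ` carrier G \<subseteq> dtuples X k" using map_dtuples[OF GA _ x0] by blast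
      show "dtuples X k \<subseteq> (\<lambda>g. map (\<phi> g) x0) ` carrier G"
        using ST[OF x0] by blast
    qed
  qed
  have cardG: "card (carrier G) = falling n k"
    using bij_betw_same_card[OF bijF] card_dtuples[OF assms(1,3)] n_def by simp
  have finG: "finite (carrier G)"
    using bij_betw_finite[OF bijF] finite_dtuples[OF assms(1)] by simp
  define P where "P = (\<lambda>g. map (\<phi> g) xs) ` carrier G"
  have Peq: "{map (\<phi> g) xs | g. g \<in> carrier G} = P" unfolding P_def by blast
  have injP: "inj_on (\<lambda>g. map (\<phi> g) xs) (carrier G)"
  proof (rule inj_onI)
    fix g h assume "g \<in> carrier G" "h \<in> carrier G" "map (\<phi> g) xs = map (\<phi> h) xs"
    then show "g = h" using free[of g h x0 k] x0 by (metis take_map x0_def order_refl)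
  qed
  define H where "H = (\<lambda>(g, i). map (\<phi> g) (window xs i (k+1)))"
  define D where "D = carrier G \<times> {..<n-k}"
  have wd: "window xs i (k+1) \<in> dtuples X (k+1)" if "i < n - k" for i
    using window_dtuples[OF dxs sxs, of i "k+1"] that len by simp
  have wX: "set (window xs i m) \<subseteq> X" for i m
    using sxs unfolding window_def by (auto dest: in_set_takeD in_set_dropD)
  have noteq: "H (g, i) \<noteq> H (h, j)" if "g \<in> carrier G" "h \<in> carrier G" "i < j" "j < n - k" for g h i j
  proof
    assume a: "H (g, i) = H (h, j)"
    have ih: "inv\<^bsub>G\<^esub> h \<in> carrier G" using grp that(2) by (simp add: group.inv_closed)
    let ?wi = "window xs i (k+1)" and ?wj = "window xs j (k+1)"
    have m: "inv\<^bsub>G\<^esub> h \<otimes>\<^bsub>G\<^esub> g \<in> carrier G" using monoid.m_closed[OF group.is_monoid[OF grp] ih that(1)] .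
    have "map (\<phi> (inv\<^bsub>G\<^esub> h \<otimes>\<^bsub>G\<^esub> g)) ?wi
        = map (\<phi> (inv\<^bsub>G\<^esub> h)) (map (\<phi> g) ?wi)"
      unfolding map_map
    proof (rule map_cong[OF refl])
      fix x assume "x \<in> set ?wi"
      then have "x \<in> X" using wX[of i "k+1"] by blast
      then show "\<phi> (inv\<^bsub>G\<^esub> h \<otimes>\<^bsub>G\<^esub> g) x = (\<phi> (inv\<^bsub>G\<^esub> h) \<circ> \<phi> g) x"
        using group_action.composition_rule[OF GA _ ih that(1)] by simp
    qed
    also have "\<dots> = map (\<phi> (inv\<^bsub>G\<^esub> h)) (map (\<phi> h) ?wj)"
      using a unfolding H_def by simp
    also have "\<dots> = ?wj"
      unfolding map_map
    proof (rule map_idI)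
      fix x assume "x \<in> set ?wj"
      then have "x \<in> X" using wX[of j "k+1"] by blast
      then show "(\<phi> (inv\<^bsub>G\<^esub> h) \<circ> \<phi> h) x = x"
        using group_action.orbit_sym_aux[OF GA that(2) _ refl] by simp
    qed
    finally have "same_orbit G \<phi> ?wi ?wj"
      unfolding same_orbit_def using m by blast
    then show False using seq that(3,4) len by auto
  qed
  have injH: "inj_on H D"
  proof (rule inj_onI)
    fix a b assume "a \<in> D" "b \<in> D" "H a = H b"
    then obtain g i h j where ab: "a = (g, i)" "b = (h, j)" "g \<in> carrier G" "h \<in> carrier G"
      "i < n - k" "j < n - k" unfolding D_def by auto
    have "i = j" using noteq[of g h i j] noteq[of h g j i] ab \<open>H a = H b\<close>
      by (metis linorder_neqE_nat)
    then have "g = h" using free[of g h "window xs i (k+1)" "k+1"] ab wd \<open>H a = H b\<close>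
      unfolding H_def by auto
    with \<open>i = j\<close> ab show "a = b" by simp
  qed
  have HD: "H ` D \<subseteq> dtuples X (k+1)"
  proof
    fix z assume "z \<in> H ` D"
    then obtain g i where "g \<in> carrier G" "i < n - k" "z = H (g, i)" unfolding D_def by auto
    then show "z \<in> dtuples X (k+1)" unfolding H_def using map_dtuples[OF GA _ wd] by simp
  qed
  have "card (H ` D) = falling n k * (n - k)"
    using card_image[OF injH] finG unfolding D_def by (simp add: card_cartesian_product cardG)
  also have "\<dots> = falling n (k+1)" by (simp add: falling_def)
  also have "\<dots> = card (dtuples X (k+1))"
  proof (cases "k + 1 \<le> n")
    case True then show ?thesis using card_dtuples[OF assms(1)] n_def by simp
  next
    case False
    then have "n = k" using assms(3) n_def by simp
    have "dtuples X (k+1) = {}"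
    proof (rule equals0I)
      fix w assume "w \<in> dtuples X (k+1)"
      then have "length w = k+1" "distinct w" "set w \<subseteq> X" unfolding dtuples_def by auto
      then have "k + 1 \<le> card X" using card_mono[OF assms(1)] distinct_card by metis
      then show False using \<open>n = k\<close> n_def by simp
    qed
    then show ?thesis using \<open>n = k\<close> by (simp add: falling_def)
  qed
  finally have HDeq: "H ` D = dtuples X (k+1)"
    using HD finite_dtuples[OF assms(1)] by (simp add: card_subset_eq)
  have c1: "finite P" unfolding P_def using finG by simp
  have c2: "card P = falling (card X) (k + 1 - 1)"
    unfolding P_def using card_image[OF injP] cardG n_def by simp
  have c3: "\<forall>p\<in>P. distinct p \<and> set p = X"
  proof
    fix p assume "p \<in> P"
    then obtain g where g: "g \<in> carrier G" "p = map (\<phi> g) xs" unfolding P_def by auto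
    show "distinct p \<and> set p = X" using map_dtuples[OF GA g(1), of xs "length xs"] dxs sxs g(2)
      group_action.surj_prop[OF GA g(1)]
      unfolding dtuples_def by auto
  qed
  have c4: "\<forall>u\<in>dtuples X (k+1). card {(p, i). p \<in> P \<and> i + (k + 1) \<le> length p \<and> window p i (k + 1) = u} = 1"
  proof
    fix u assume "u \<in> dtuples X (k+1)"
    then obtain g i where gi: "g \<in> carrier G" "i < n - k" "H (g, i) = u"
      using HDeq unfolding D_def by force
    have "{(p, i). p \<in> P \<and> i + (k + 1) \<le> length p \<and> window p i (k + 1) = u}
        = {(map (\<phi> g) xs, i)}"
    proof (intro equalityI subsetI)
      fix z assume "z \<in> {(p, i). p \<in> P \<and> i + (k + 1) \<le> length p \<and> window p i (k + 1) = u}"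
      then obtain p j where z0: "z = (p, j)" "p \<in> P" "j + (k+1) \<le> length p" "window p j (k+1) = u"
        by blast
      then obtain h where h: "h \<in> carrier G" "p = map (\<phi> h) xs" unfolding P_def by blast
      have z: "z = (p, j)" "h \<in> carrier G" "p = map (\<phi> h) xs"
        "j + (k+1) \<le> n" "window p j (k+1) = u" using z0 h len by auto
      have "H (h, j) = H (g, i)" using z gi unfolding H_def by (simp add: window_map)
      moreover have "(h, j) \<in> D" "(g, i) \<in> D" using z gi unfolding D_def by auto
      ultimately have "(h, j) = (g, i)" by (rule inj_onD[OF injH])
      then show "z \<in> {(map (\<phi> g) xs, i)}" using z by simp
    next
      fix z assume "z \<in> {(map (\<phi> g) xs, i)}"
      then show "z \<in> {(p, i). p \<in> P \<and> i + (k + 1) \<le> length p \<and> window p i (k + 1) = u}"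
        using gi len unfolding P_def H_def by (auto simp: window_map)
    qed
    then show "card {(p, i). p \<in> P \<and> i + (k + 1) \<le> length p \<and> window p i (k + 1) = u} = 1"
      by simp
  qed
  show ?thesis unfolding Peq perm_design_def using c1 c2 c3 c4 by blast
qed

end
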